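(* Fix $\epsilon>0$, a function $A:(2\pi,\infty)\to[0,\infty)$ and a function $B:\{(\beta_L,\beta_R)\in(0,\infty)^2:\beta_L\beta_R>4\pi^2\}\to[0,\infty)$. Consider the class $\mathcal{C}$ of all unitary, modular invariant 2D CFT spectra (any central charge $c\geqslant0$) with a normalizable vacuum ($n_{0,0}\geqslant1$) satisfying $$\sum_{h+\bar h\leqslant\frac c{12}+\epsilon}n_{h,\bar h}e^{-(h+\bar h)\beta}\leqslant A(\beta)\ \ (\beta>2\pi),\qquad \sum_{\min(h,\bar h)\leqslant\frac{c}{24}}n_{h,\bar h}e^{-h\beta_L-\bar h\beta_R}\leqslant B(\beta_L,\beta_R)\ \ (\beta_L\beta_R>4\pi^2).$$ Then for each $(\beta_L,\beta_R)$ with $\beta_L\beta_R\neq4\pi^2$ there is a constant $K<\infty$, independent of the theory in $\mathcal{C}$ and of $c$, such that every theory in $\mathcal{C}$ satisfies $$\left|\log Z(\beta_L,\beta_R)-\tfrac c{24}(\beta_L+\beta_R)\right|\leqslant K\ \text{ if }\beta_L\beta_R>4\pi^2,\qquad \left|\log Z(\beta_L,\beta_R)-\tfrac{\pi^2c}{6}\left(\tfrac1{\beta_L}+\tfrac1{\beta_R}\right)\right|\leqslant K\ \text{ if }\beta_L\beta_R<4\pi^2.$$ That is, as $c\to\infty$ with $\beta_L,\beta_R$ fixed, the free energy equals the thermal AdS value $\frac c{24}(\beta_L+\beta_R)+O(1)$ for $\beta_L\beta_R>4\pi^2$ and the BTZ value $\frac{\pi^2c}{6}(\frac1{\beta_L}+\frac1{\beta_R})+O(1)$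 for $\beta_L\beta_R<4\pi^2$.
   Context: A unitary, modular invariant 2D CFT spectrum consists of a real number $c\geqslant0$ (central charge) and a countable collection of pairs $(h,\bar h)$ with $h,\bar h\geqslant0$, each with multiplicity $n_{h,\bar h}\in\mathbb{N}$, such that $Z(\beta_L,\beta_R)=\sum_{h,\bar h}n_{h,\bar h}e^{-(h-\frac c{24})\beta_L-(\bar h-\frac c{24})\beta_R}$ is finite for all $\beta_L,\beta_R>0$ and $Z(\beta_L,\beta_R)=Z(4\pi^2/\beta_L,4\pi^2/\beta_R)$. (This statement is posed as a conjecture of Hartman–Keller–Stoica and is proved in the paper.) *)

theory Defs
  imports "HOL-Analysis.Analysis"
begin

text \<open>A spectrum is given by a central charge c and a multiplicity function
  n :: (h, hbar) \<Rightarrow> nat; the pairs with n (h,hbar) > 0 form the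
  (countable) collection of states.\<close>

definition cft_term :: "real \<Rightarrow> (real \<times> real \<Rightarrow> nat) \<Rightarrow> real \<Rightarrow> real \<Rightarrow> real \<times> real \<Rightarrow> real" where
  "cft_term c n bL bR p =
     real (n p) * exp (- (fst p - c / 24) * bL - (snd p - c / 24) * bR)"

definition cft_Z :: "real \<Rightarrow> (real \<times> real \<Rightarrow> nat) \<Rightarrow> real \<Rightarrow> real \<Rightarrow> real" where
  "cft_Z c n bL bR = (\<Sum>\<^sub>\<infinity>p\<in>UNIV. cft_term c n bL bR p)"

definition cft_spectrum :: "real \<Rightarrow> (real \<times> real \<Rightarrow> nat) \<Rightarrow> bool" where
  "cft_spectrum c n \<longleftrightarrow>
     c \<ge> 0 \<and>
     (\<forall>h hb. n (h, hb) \<noteq> 0 \<longrightarrow> h \<ge> 0 \<and> hb \<ge> 0) \<and>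
     countable {p. n p \<noteq> 0} \<and>
     (\<forall>bL bR. bL > 0 \<longrightarrow> bR > 0 \<longrightarrow> cft_term c n bL bR summable_on UNIV) \<and>
     (\<forall>bL bR. bL > 0 \<longrightarrow> bR > 0 \<longrightarrow>
        cft_Z c n bL bR = cft_Z c n (4 * pi\<^sup>2 / bL) (4 * pi\<^sup>2 / bR))"

end

theory Submission
  imports Defs
begin

lemma term_nonneg: "cft_term c n x y p \<ge> 0"
  unfolding cft_term_def by simp

lemma term_summ:
  assumes "cft_spectrum c n" "x > 0" "y > 0"
  shows "cft_term c n x y summable_on X"
  using assms unfolding cft_spectrum_def
  by (meson subset_UNIV summable_on_subset_banach)

lemma Z_split:
  assumes "cft_spectrum c n" "x > 0" "y > 0"
  shows "cft_Z c n x y = infsum (cft_term c n x y) X + infsum (cft_term c n x y) (-X)"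
proof -
  have "cft_Z c n x y = infsum (cft_term c n x y) (X \<union> -X)" unfolding cft_Z_def by simp
  also have "\<dots> = infsum (cft_term c n x y) X + infsum (cft_term c n x y) (-X)"
    by (rule infsum_Un_disjoint) (use term_summ[OF assms] in auto)
  finally show ?thesis .
qed

lemma le_Z:
  assumes "cft_spectrum c n" "x > 0" "y > 0"
  shows "infsum (cft_term c n x y) X \<le> cft_Z c n x y"
  unfolding cft_Z_def
  by (rule infsum_mono2) (use term_summ[OF assms] term_nonneg in auto)

lemma vac:
  assumes "cft_spectrum c n" "x > 0" "y > 0" "n (0,0) \<ge> 1"
  shows "exp (c/24*(x+y)) \<le> cft_Z c n x y"
proof -
  have "cft_term c n x y (0,0) = real (n (0,0)) * exp (c/24*(x+y))"
    unfolding cft_term_def by (simp add: algebra_simps)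
  also have "\<dots> \<ge> exp (c/24*(x+y))" using assms(4) by simp
  finally have "exp (c/24*(x+y)) \<le> infsum (cft_term c n x y) {(0,0)}" by simp
  also have "\<dots> \<le> cft_Z c n x y" by (rule le_Z[OF assms(1-3)])
  finally show ?thesis .
qed

lemma term_factor:
  "cft_term c n x y p = exp (c/24*(x+y)) * (real (n p) * exp (- fst p * x - snd p * y))"
proof -
  have "- (fst p - c / 24) * x - (snd p - c / 24) * y = c/24*(x+y) + (- fst p * x - snd p * y)"
    by (simp add: algebra_simps)
  then show ?thesis unfolding cft_term_def by (simp add: exp_add)
qed

lemma term_factor2:
  "cft_term c n b b p = exp (c/12*b) * (real (n p) * exp (- (fst p + snd p) * b))"
proof -
  have "- (fst p - c / 24) * b - (snd p - c / 24) * b = c/12*b + (- (fst p + snd p) * b)"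
    by (simp add: algebra_simps)
  then show ?thesis unfolding cft_term_def by (simp add: exp_add)
qed

lemma factored_sum:
  assumes "cft_spectrum c n" "x > 0" "y > 0"
  shows "infsum (cft_term c n x y) X = exp (c/24*(x+y)) * infsum (\<lambda>p. real (n p) * exp (- fst p * x - snd p * y)) X"
proof -
  have s: "(\<lambda>p. real (n p) * exp (- fst p * x - snd p * y)) summable_on X"
  proof -
    have "(\<lambda>p. exp (-(c/24*(x+y))) * cft_term c n x y p) summable_on X"
      by (rule summable_on_cmult_right) (rule term_summ[OF assms])
    moreover have "(\<lambda>p. exp (-(c/24*(x+y))) * cft_term c n x y p) = (\<lambda>p. real (n p) * exp (- fst p * x - snd p * y))"
      by (rule ext) (simp add: term_factor exp_minus field_simps)
    ultimately show ?thesis by simp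
  qed
  have e: "cft_term c n x y = (\<lambda>p. exp (c/24*(x+y)) * (real (n p) * exp (- fst p * x - snd p * y)))"
    by (rule ext) (rule term_factor)
  show ?thesis unfolding e by (rule infsum_cmult_right) (use s in auto)
qed

lemma factored_sum2:
  assumes "cft_spectrum c n" "b > 0"
  shows "infsum (cft_term c n b b) X = exp (c/12*b) * infsum (\<lambda>p. real (n p) * exp (- (fst p + snd p) * b)) X"
proof -
  have s: "(\<lambda>p. real (n p) * exp (- (fst p + snd p) * b)) summable_on X"
  proof -
    have "(\<lambda>p. exp (-(c/12*b)) * cft_term c n b b p) summable_on X"
      by (rule summable_on_cmult_right) (rule term_summ[OF assms(1,2,2)])
    moreover have "(\<lambda>p. exp (-(c/12*b)) * cft_term c n b b p) = (\<lambda>p. real (n p) * exp (- (fst p + snd p) * b))"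
      by (rule ext) (simp add: term_factor2 exp_minus field_simps)
    ultimately show ?thesis by simp
  qed
  have e: "cft_term c n b b = (\<lambda>p. exp (c/12*b) * (real (n p) * exp (- (fst p + snd p) * b)))"
    by (rule ext) (rule term_factor2)
  show ?thesis unfolding e by (rule infsum_cmult_right) (use s in auto)
qed

lemma heavy_mono:
  assumes "cft_spectrum c n" "0 < x'" "x' \<le> x" "0 < y'" "y' \<le> y"
  shows "infsum (cft_term c n x y) (-{p. min (fst p) (snd p) \<le> c/24})
       \<le> infsum (cft_term c n x' y') (-{p. min (fst p) (snd p) \<le> c/24})"
proof (rule infsum_mono)
  show "cft_term c n x y summable_on (-{p. min (fst p) (snd p) \<le> c/24})" by (rule term_summ) (use assms in auto)
  show "cft_term c n x' y' summable_on (-{p. min (fst p) (snd p) \<le> c/24})" by (rule term_summ) (use assms in auto)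
  fix p assume "p \<in> -{p. min (fst p) (snd p) \<le> c/24}"
  then have h1: "fst p - c/24 > 0" "snd p - c/24 > 0" by auto
  have "(fst p - c/24) * x' \<le> (fst p - c/24) * x" using h1 assms by (intro mult_left_mono) auto
  moreover have "(snd p - c/24) * y' \<le> (snd p - c/24) * y" using h1 assms by (intro mult_left_mono) auto
  ultimately have "- (fst p - c / 24) * x - (snd p - c / 24) * y \<le> - (fst p - c / 24) * x' - (snd p - c / 24) * y'"
    by linarith
  then show "cft_term c n x y p \<le> cft_term c n x' y' p"
    unfolding cft_term_def by (intro mult_left_mono) auto
qed

lemma modular:
  assumes "cft_spectrum c n" "x > 0" "y > 0"
  shows "cft_Z c n x y = cft_Z c n (4*pi^2/x) (4*pi^2/y)"
  using assms unfolding cft_spectrum_def by blast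

lemma step:
  assumes sp: "cft_spectrum c n" and xy: "x > 0" "y > 0"
    and r: "r1 > 0" "r2 > 0" "r1 \<ge> 4*pi^2/x" "r2 \<ge> 4*pi^2/y"
    and light: "infsum (cft_term c n x y) {p. min (fst p) (snd p) \<le> c/24} \<le> M"
  shows "cft_Z c n x y \<le> M + cft_Z c n r1 r2"
proof -
  let ?H = "-{p. min (fst p) (snd p) \<le> c/24}"
  have a: "4*pi^2/r1 \<le> x" using r xy by (simp add: field_simps divide_le_eq mult.commute)
  have b: "4*pi^2/r2 \<le> y" using r xy by (simp add: field_simps divide_le_eq mult.commute)
  have "infsum (cft_term c n x y) ?H \<le> infsum (cft_term c n (4*pi^2/r1) (4*pi^2/r2)) ?H"
    by (rule heavy_mono[OF sp _ a _ b]) (use r in auto)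
  also have "\<dots> \<le> cft_Z c n (4*pi^2/r1) (4*pi^2/r2)" by (rule le_Z[OF sp]) (use r in auto)
  also have "\<dots> = cft_Z c n r1 r2" using modular[OF sp r(1,2)] by simp
  finally show ?thesis using Z_split[OF sp xy, of "{p. min (fst p) (snd p) \<le> c/24}"] light by linarith
qed

lemma diag:
  assumes sp: "cft_spectrum c n" and eps: "\<epsilon> > 0" and b: "\<beta> > 2*pi"
    and light: "infsum (\<lambda>p. real (n p) * exp (- (fst p + snd p) * \<beta>)) {p. fst p + snd p \<le> c / 12 + \<epsilon>} \<le> Aval"
  shows "cft_Z c n \<beta> \<beta> \<le> exp (c/12*\<beta>) * (Aval / (1 - exp (- (\<beta> - 4*pi^2/\<beta>) * \<epsilon>)))"
proof -
  define b' where "b' = 4*pi^2/\<beta>"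
  let ?l = "{p. fst p + snd p \<le> c / 12 + \<epsilon>}"
  let ?d = "exp (- (\<beta> - b') * \<epsilon>)"
  have bpos: "\<beta> > 0" using b pi_gt_zero by linarith
  have "(2*pi)*(2*pi) < \<beta> * \<beta>" using mult_strict_mono[of "2*pi" \<beta> "2*pi" \<beta>] b bpos pi_gt_zero by linarith
  then have "b' < \<beta>" using bpos unfolding b'_def by (simp add: field_simps power2_eq_square)
  then have gap: "\<beta> - b' > 0" by simp
  have b'pos: "b' > 0" using bpos unfolding b'_def by simp
  have d1: "?d < 1" using mult_pos_pos[OF gap eps] by (simp add: algebra_simps)
  have Zl: "infsum (cft_term c n \<beta> \<beta>) ?l \<le> exp (c/12*\<beta>) * Aval"
    unfolding factored_sum2[OF sp bpos] using light by simp
  have "infsum (cft_term c n \<beta> \<beta>) (-?l) \<le> infsum (\<lambda>p. ?d * cft_term c n b' b' p) (-?l)"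
  proof (rule infsum_mono)
    show "cft_term c n \<beta> \<beta> summable_on (-?l)" by (rule term_summ) (use sp bpos in auto)
    show "(\<lambda>p. ?d * cft_term c n b' b' p) summable_on (-?l)"
      by (rule summable_on_cmult_right, rule term_summ) (use sp b'pos in auto)
    fix p assume "p \<in> -?l"
    then have E: "fst p + snd p - c/12 > \<epsilon>" by auto
    have "\<epsilon> * (\<beta> - b') \<le> (fst p + snd p - c/12) * (\<beta> - b')"
      using E gap by (intro mult_right_mono) auto
    then have "- (fst p - c / 24) * \<beta> - (snd p - c / 24) * \<beta> \<le> - (\<beta> - b') * \<epsilon> + (- (fst p - c / 24) * b' - (snd p - c / 24) * b')"
      by (simp add: algebra_simps diff_divide_distrib)
    then have "exp (- (fst p - c / 24) * \<beta> - (snd p - c / 24) * \<beta>) \<le> ?d * exp (- (fst p - c / 24) * b' - (snd p - c / 24) * b')"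
      by (simp add: exp_add[symmetric])
    then show "cft_term c n \<beta> \<beta> p \<le> ?d * cft_term c n b' b' p"
      unfolding cft_term_def by (simp add: mult.left_commute mult_left_mono)
  qed
  also have "\<dots> = ?d * infsum (cft_term c n b' b') (-?l)"
    by (rule infsum_cmult_right) (rule term_summ, use sp b'pos in auto)
  also have "\<dots> \<le> ?d * cft_Z c n b' b'"
    by (rule mult_left_mono, rule le_Z) (use sp b'pos in auto)
  also have "cft_Z c n b' b' = cft_Z c n \<beta> \<beta>" using modular[OF sp bpos bpos] unfolding b'_def by simp
  finally have Zh: "infsum (cft_term c n \<beta> \<beta>) (-?l) \<le> ?d * cft_Z c n \<beta> \<beta>" .
  have "cft_Z c n \<beta> \<beta> \<le> exp (c/12*\<beta>) * Aval + ?d * cft_Z c n \<beta> \<beta>"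
    using Z_split[OF sp bpos bpos, of ?l] Zl Zh by linarith
  then have "(1 - ?d) * cft_Z c n \<beta> \<beta> \<le> exp (c/12*\<beta>) * Aval" by (simp add: algebra_simps)
  then show ?thesis using d1 unfolding b'_def by (simp add: field_simps)
qed

definition cls :: "real \<Rightarrow> (real \<Rightarrow> real) \<Rightarrow> (real \<Rightarrow> real \<Rightarrow> real) \<Rightarrow> real \<Rightarrow> (real \<times> real \<Rightarrow> nat) \<Rightarrow> bool" where
  "cls \<epsilon> A B c n \<longleftrightarrow>
       cft_spectrum c n \<and> n (0, 0) \<ge> 1 \<and>
       (\<forall>\<beta>. \<beta> > 2 * pi \<longrightarrow>
          (\<Sum>\<^sub>\<infinity>p\<in>{p. fst p + snd p \<le> c / 12 + \<epsilon>}.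
              real (n p) * exp (- (fst p + snd p) * \<beta>)) \<le> A \<beta>) \<and>
       (\<forall>bL' bR'. bL' > 0 \<longrightarrow> bR' > 0 \<longrightarrow> bL' * bR' > 4 * pi\<^sup>2 \<longrightarrow>
          (\<Sum>\<^sub>\<infinity>p\<in>{p. min (fst p) (snd p) \<le> c / 24}.
              real (n p) * exp (- fst p * bL' - snd p * bR')) \<le> B bL' bR')"

definition good :: "real \<Rightarrow> (real \<Rightarrow> real) \<Rightarrow> (real \<Rightarrow> real \<Rightarrow> real) \<Rightarrow> real \<Rightarrow> real \<Rightarrow> bool" where
  "good \<epsilon> A B x y \<longleftrightarrow> (\<exists>K. \<forall>c n. cls \<epsilon> A B c n \<longrightarrow> cft_Z c n x y \<le> exp (c/24*(x+y)) * K)"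

lemma delta_lt1:
  assumes "m > 2*pi" "\<epsilon> > 0"
  shows "exp (- (m - 4*pi^2/m) * \<epsilon>) < 1"
proof -
  have mpos: "m > 0" using assms pi_gt_zero by linarith
  have "(2*pi)*(2*pi) < m * m" using mult_strict_mono[of "2*pi" m "2*pi" m] assms mpos pi_gt_zero by linarith
  then have "4*pi^2/m < m" using mpos by (simp add: field_simps power2_eq_square)
  then have g: "m - 4*pi^2/m > 0" by simp
  show ?thesis using mult_pos_pos[OF g assms(2)] by (simp add: algebra_simps)
qed

lemma prod_gt:
  assumes "x > 2*pi" "y > 2*pi"
  shows "x * y > 4*pi^2"
proof -
  have "(2*pi)*(2*pi) < x * y" using mult_strict_mono[of "2*pi" x "2*pi" y] assms pi_gt_zero by linarith
  then show ?thesis by (simp add: power2_eq_square)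
qed

lemma light_bound:
  assumes "cls \<epsilon> A B c n" "x > 0" "y > 0" "x * y > 4*pi^2"
  shows "infsum (cft_term c n x y) {p. min (fst p) (snd p) \<le> c/24} \<le> exp (c/24*(x+y)) * B x y"
proof -
  have sp: "cft_spectrum c n" using assms(1) unfolding cls_def by blast
  have "(\<Sum>\<^sub>\<infinity>p\<in>{p. min (fst p) (snd p) \<le> c / 24}. real (n p) * exp (- fst p * x - snd p * y)) \<le> B x y"
  proof -
    have Bc: "\<forall>bL' bR'. bL' > 0 \<longrightarrow> bR' > 0 \<longrightarrow> bL' * bR' > 4 * pi\<^sup>2 \<longrightarrow>
          (\<Sum>\<^sub>\<infinity>p\<in>{p. min (fst p) (snd p) \<le> c / 24}.
              real (n p) * exp (- fst p * bL' - snd p * bR')) \<le> B bL' bR'"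
      using assms(1) unfolding cls_def by blast
    show ?thesis by (rule Bc[rule_format, OF assms(2,3,4)])
  qed
  then show ?thesis unfolding factored_sum[OF sp assms(2,3)] by simp
qed

lemma R1:
  assumes eps: "\<epsilon> > 0" and Apos: "\<forall>\<beta>. \<beta> > 2 * pi \<longrightarrow> A \<beta> \<ge> 0"
    and cl: "cls \<epsilon> A B c n" and x: "x > 2*pi" and y: "y > 2*pi"
  shows "cft_Z c n x y \<le> exp (c/24*(x+y)) * (B x y + A (min x y) / (1 - exp (- (min x y - 4*pi^2/(min x y)) * \<epsilon>)))"
proof -
  define m where "m = min x y"
  define C where "C = A m / (1 - exp (- (m - 4*pi^2/m) * \<epsilon>))"
  have sp: "cft_spectrum c n" using cl unfolding cls_def by blast
    have c0: "c \<ge> 0" using sp unfolding cft_spectrum_def by blast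
  have xpos: "x > 0" and ypos: "y > 0" using x y pi_gt_zero by linarith+
  have m: "m > 2*pi" "m \<le> x" "m \<le> y" using x y unfolding m_def by auto
  have mpos: "m > 0" using m pi_gt_zero by linarith
  have "A m \<ge> 0" using Apos m(1) by blast
  then have C0: "C \<ge> 0" unfolding C_def using delta_lt1[OF m(1) eps] by simp
  have Am: "(\<Sum>\<^sub>\<infinity>p\<in>{p. fst p + snd p \<le> c / 12 + \<epsilon>}. real (n p) * exp (- (fst p + snd p) * m)) \<le> A m"
  proof -
    have Ac: "\<forall>\<beta>. \<beta> > 2 * pi \<longrightarrow>
          (\<Sum>\<^sub>\<infinity>p\<in>{p. fst p + snd p \<le> c / 12 + \<epsilon>}.
              real (n p) * exp (- (fst p + snd p) * \<beta>)) \<le> A \<beta>"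
      using cl unfolding cls_def by blast
    show ?thesis by (rule Ac[rule_format, OF m(1)])
  qed
  let ?L = "{p. min (fst p) (snd p) \<le> c/24}"
  have "infsum (cft_term c n x y) (-?L) \<le> infsum (cft_term c n m m) (-?L)"
    by (rule heavy_mono[OF sp]) (use m mpos in auto)
  also have "\<dots> \<le> cft_Z c n m m" by (rule le_Z[OF sp mpos mpos])
  also have "\<dots> \<le> exp (c/12*m) * C" unfolding C_def by (rule diag[OF sp eps m(1) Am])
  also have "\<dots> \<le> exp (c/24*(x+y)) * C"
  proof (rule mult_right_mono[OF _ C0])
    have "c*(2*m) \<le> c*(x+y)" using c0 m by (intro mult_left_mono) auto
    then have "c/12*m \<le> c/24*(x+y)" by (simp add: field_simps)
    then show "exp (c/12*m) \<le> exp (c/24*(x+y))" by simp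
  qed
  finally have H: "infsum (cft_term c n x y) (-?L) \<le> exp (c/24*(x+y)) * C" .
  have Lb: "infsum (cft_term c n x y) ?L \<le> exp (c/24*(x+y)) * B x y"
    by (rule light_bound[OF cl xpos ypos prod_gt[OF x y]])
  have "cft_Z c n x y \<le> exp (c/24*(x+y)) * B x y + exp (c/24*(x+y)) * C"
    using Z_split[OF sp xpos ypos, of ?L] H Lb by linarith
  then show ?thesis unfolding C_def m_def by (simp add: distrib_left)
qed

lemma good_R1:
  assumes eps: "\<epsilon> > 0" and Apos: "\<forall>\<beta>. \<beta> > 2 * pi \<longrightarrow> A \<beta> \<ge> 0"
    and x: "x > 2*pi" and y: "y > 2*pi"
  shows "good \<epsilon> A B x y"
  unfolding good_def using R1[OF eps Apos _ x y] by blast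

lemma good_step:
  assumes xy: "x > 0" "y > 0" "x * y > 4*pi^2"
    and r: "r1 > 0" "r2 > 0" "r1 \<ge> 4*pi^2/x" "r2 \<ge> 4*pi^2/y" "r1 + r2 \<le> x + y"
    and g: "good \<epsilon> A B r1 r2"
  shows "good \<epsilon> A B x y"
proof -
  obtain K where K: "\<And>c n. cls \<epsilon> A B c n \<Longrightarrow> cft_Z c n r1 r2 \<le> exp (c/24*(r1+r2)) * K"
    using g unfolding good_def by blast
  have "cft_Z c n x y \<le> exp (c/24*(x+y)) * (B x y + max K 0)" if cl: "cls \<epsilon> A B c n" for c n
  proof -
    have sp: "cft_spectrum c n" using cl unfolding cls_def by blast
    have c0: "c \<ge> 0" using sp unfolding cft_spectrum_def by blast
    have "cft_Z c n x y \<le> exp (c/24*(x+y)) * B x y + cft_Z c n r1 r2"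
      by (rule step[OF sp xy(1,2) r(1-4) light_bound[OF cl xy]])
    also have "cft_Z c n r1 r2 \<le> exp (c/24*(r1+r2)) * max K 0"
      using K[OF cl] by (meson max.cobounded1 mult_left_mono order_trans exp_ge_zero)
    also have "\<dots> \<le> exp (c/24*(x+y)) * max K 0"
      using c0 r(5) by (intro mult_right_mono) (auto simp: mult_left_mono)
    finally show ?thesis by (simp add: distrib_left)
  qed
  then show ?thesis unfolding good_def by blast
qed

lemma induct_good:
  assumes eps: "\<epsilon> > 0" and Apos: "\<forall>\<beta>. \<beta> > 2 * pi \<longrightarrow> A \<beta> \<ge> 0"
    and P0: "P0 > 4*pi^2"
  defines "d \<equiv> (P0 - 4*pi^2) / (2*pi)"
  shows "\<forall>x y. x > 0 \<longrightarrow> y > 0 \<longrightarrow> x * y \<ge> P0 \<longrightarrow> min x y > 2*pi - real N * (d/2) \<longrightarrow> good \<epsilon> A B x y"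
proof (induction N)
  have dpos: "d > 0" unfolding d_def using P0 by simp
  {
    case 0
    show ?case using good_R1[OF eps Apos] by auto
  next
    case (Suc N)
    show ?case
    proof (intro allI impI)
      fix x y :: real
      assume x: "x > 0" and y: "y > 0" and xy: "x * y \<ge> P0" and mn: "min x y > 2*pi - real (Suc N) * (d/2)"
      have xy4: "x * y > 4*pi^2" using xy P0 by linarith
      show "good \<epsilon> A B x y"
      proof (cases "x > 2*pi \<and> y > 2*pi")
        case True then show ?thesis using good_R1[OF eps Apos] by auto
      next
        case False
        show ?thesis
        proof (cases "x \<le> y")
          case True
          with False have x2: "x \<le> 2*pi" by auto
          define a where "a = 4*pi^2/x"
          define r1 where "r1 = a + d/2"
          define r2 where "r2 = x + y - a - d/2"
          have a2: "a \<ge> 2*pi"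
          proof -
            have "2*pi*x \<le> 2*pi*(2*pi)" using x2 by (intro mult_left_mono) auto
            then show ?thesis unfolding a_def using x by (simp add: field_simps power2_eq_square)
          qed
          have "y - a = (x*y - 4*pi^2)/x" unfolding a_def using x by (simp add: field_simps)
          also have "\<dots> \<ge> (P0 - 4*pi^2)/x" using xy x by (intro divide_right_mono) auto
          also have "(P0 - 4*pi^2)/x \<ge> d" unfolding d_def
            using P0 x x2 by (intro divide_left_mono) auto
          finally have ya: "y - a \<ge> d" .
          have r2x: "r2 \<ge> x + d/2" unfolding r2_def using ya by simp
          have r1x: "r1 > 2*pi" unfolding r1_def using a2 dpos by simp
          have r1p: "r1 > 0" using r1x pi_gt_zero by linarith
          have r2p: "r2 > 0" using r2x x dpos by linarith
          have mnx: "min x y = x" using True by simp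
          have "r1 * r2 = x * y + (r1 - x) * (r2 - x)" unfolding r1_def r2_def by (simp add: algebra_simps)
          moreover have "(r1 - x) * (r2 - x) \<ge> 0" using r1x x2 r2x dpos by simp
          ultimately have rP: "r1 * r2 \<ge> P0" using xy by linarith
          have dN: "0 \<le> real N * (d/2)" using dpos by simp
          have mx: "x > 2*pi - real N * (d/2) - d/2" using mn mnx by (simp add: algebra_simps add_divide_distrib)
          have rmin: "min r1 r2 > 2*pi - real N * (d/2)"
            using r1x r2x mx dN by simp
          have g: "good \<epsilon> A B r1 r2" using Suc.IH r1p r2p rP rmin by blast
          have c1: "r1 \<ge> 4*pi^2/x" unfolding r1_def a_def using dpos by simp
          have "4*pi^2/y \<le> x" using xy4 y by (simp add: field_simps mult.commute)
          then have c2: "r2 \<ge> 4*pi^2/y" using r2x dpos by linarith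
          have c3: "r1 + r2 \<le> x + y" unfolding r1_def r2_def by simp
          show ?thesis by (rule good_step[OF x y xy4 r1p r2p c1 c2 c3 g])
        next
          case False2: False
          with False have y2: "y \<le> 2*pi" by auto
          define a where "a = 4*pi^2/y"
          define r2 where "r2 = a + d/2"
          define r1 where "r1 = x + y - a - d/2"
          have a2: "a \<ge> 2*pi"
          proof -
            have "2*pi*y \<le> 2*pi*(2*pi)" using y2 by (intro mult_left_mono) auto
            then show ?thesis unfolding a_def using y by (simp add: field_simps power2_eq_square)
          qed
          have "x - a = (x*y - 4*pi^2)/y" unfolding a_def using y by (simp add: field_simps)
          also have "\<dots> \<ge> (P0 - 4*pi^2)/y" using xy y by (intro divide_right_mono) auto
          also have "(P0 - 4*pi^2)/y \<ge> d" unfolding d_def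
            using P0 y y2 by (intro divide_left_mono) auto
          finally have ya: "x - a \<ge> d" .
          have r1y: "r1 \<ge> y + d/2" unfolding r1_def using ya by simp
          have r2y: "r2 > 2*pi" unfolding r2_def using a2 dpos by simp
          have r2p: "r2 > 0" using r2y pi_gt_zero by linarith
          have r1p: "r1 > 0" using r1y y dpos by linarith
          have mny: "min x y = y" using False2 by simp
          have "r1 * r2 = x * y + (r1 - y) * (r2 - y)" unfolding r1_def r2_def by (simp add: algebra_simps)
          moreover have "(r1 - y) * (r2 - y) \<ge> 0" using r2y y2 r1y dpos by simp
          ultimately have rP: "r1 * r2 \<ge> P0" using xy by linarith
          have dN: "0 \<le> real N * (d/2)" using dpos by simp
          have my: "y > 2*pi - real N * (d/2) - d/2" using mn mny by (simp add: algebra_simps add_divide_distrib)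
          have rmin: "min r1 r2 > 2*pi - real N * (d/2)"
            using r2y r1y my dN by simp
          have g: "good \<epsilon> A B r1 r2" using Suc.IH r1p r2p rP rmin by blast
          have c2: "r2 \<ge> 4*pi^2/y" unfolding r2_def a_def using dpos by simp
          have "4*pi^2/x \<le> y" using xy4 x by (simp add: field_simps)
          then have c1: "r1 \<ge> 4*pi^2/x" using r1y dpos by linarith
          have c3: "r1 + r2 \<le> x + y" unfolding r1_def r2_def by simp
          show ?thesis by (rule good_step[OF x y xy4 r1p r2p c1 c2 c3 g])
        qed
      qed
    qed
  }
qed

lemma low_bound:
  assumes eps: "\<epsilon> > 0" and Apos: "\<forall>\<beta>. \<beta> > 2 * pi \<longrightarrow> A \<beta> \<ge> 0"
    and x: "x > 0" and y: "y > 0" and xy: "x * y > 4*pi^2"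
  shows "\<exists>K. \<forall>c n. cls \<epsilon> A B c n \<longrightarrow> \<bar>ln (cft_Z c n x y) - c/24*(x+y)\<bar> \<le> K"
proof -
  define d where "d = (x*y - 4*pi^2) / (2*pi)"
  have dpos: "d > 0" unfolding d_def using xy by simp
  define N where "N = nat \<lceil>4*pi/d\<rceil>"
  have "real N \<ge> 4*pi/d" unfolding N_def by linarith
  then have "real N * d \<ge> 4*pi" using dpos by (simp add: field_simps)
  then have "min x y > 2*pi - real N * (d/2)" using x y by auto
  then have "good \<epsilon> A B x y"
    using induct_good[OF eps Apos xy, of N B, folded d_def] x y by auto
  then obtain K where K: "\<And>c n. cls \<epsilon> A B c n \<Longrightarrow> cft_Z c n x y \<le> exp (c/24*(x+y)) * K"
    unfolding good_def by blast
  have "\<bar>ln (cft_Z c n x y) - c/24*(x+y)\<bar> \<le> ln (max K 1)" if cl: "cls \<epsilon> A B c n" for c n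
  proof -
    have sp: "cft_spectrum c n" using cl unfolding cls_def by blast
    have v: "n (0,0) \<ge> 1" using cl unfolding cls_def by blast
    have lo: "exp (c/24*(x+y)) \<le> cft_Z c n x y" by (rule vac[OF sp x y v])
    have Zpos: "cft_Z c n x y > 0" using lo by (meson exp_gt_zero less_le_trans)
    have up: "cft_Z c n x y \<le> exp (c/24*(x+y)) * max K 1"
      using K[OF cl] by (meson exp_ge_zero max.cobounded1 mult_left_mono order_trans)
    have l1: "c/24*(x+y) \<le> ln (cft_Z c n x y)" by (metis ln_exp ln_le_cancel_iff exp_gt_zero Zpos lo)
    have "ln (cft_Z c n x y) \<le> ln (exp (c/24*(x+y)) * max K 1)" using up Zpos by simp
    also have "\<dots> = c/24*(x+y) + ln (max K 1)" by (simp add: ln_mult)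
    finally show ?thesis using l1 by simp
  qed
  then show ?thesis by blast
qed

theorem mainTheorem6:
  fixes \<epsilon> :: real and A :: "real \<Rightarrow> real" and B :: "real \<Rightarrow> real \<Rightarrow> real"
  assumes "\<epsilon> > 0"
    and "\<forall>\<beta>. \<beta> > 2 * pi \<longrightarrow> A \<beta> \<ge> 0"
    and "\<forall>bL bR. bL > 0 \<longrightarrow> bR > 0 \<longrightarrow> bL * bR > 4 * pi\<^sup>2 \<longrightarrow> B bL bR \<ge> 0"
  shows "\<forall>bL bR. bL > 0 \<longrightarrow> bR > 0 \<longrightarrow> bL * bR \<noteq> 4 * pi\<^sup>2 \<longrightarrow>
    (\<exists>K::real. \<forall>(c::real) (n :: real \<times> real \<Rightarrow> nat).
       cft_spectrum c n \<and> n (0, 0) \<ge> 1 \<and>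
       (\<forall>\<beta>. \<beta> > 2 * pi \<longrightarrow>
          (\<Sum>\<^sub>\<infinity>p\<in>{p. fst p + snd p \<le> c / 12 + \<epsilon>}.
              real (n p) * exp (- (fst p + snd p) * \<beta>)) \<le> A \<beta>) \<and>
       (\<forall>bL' bR'. bL' > 0 \<longrightarrow> bR' > 0 \<longrightarrow> bL' * bR' > 4 * pi\<^sup>2 \<longrightarrow>
          (\<Sum>\<^sub>\<infinity>p\<in>{p. min (fst p) (snd p) \<le> c / 24}.
              real (n p) * exp (- fst p * bL' - snd p * bR')) \<le> B bL' bR')
       \<longrightarrow>
       (bL * bR > 4 * pi\<^sup>2 \<longrightarrow>
          \<bar>ln (cft_Z c n bL bR) - c / 24 * (bL + bR)\<bar> \<le> K) \<and>
       (bL * bR < 4 * pi\<^sup>2 \<longrightarrow>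
          \<bar>ln (cft_Z c n bL bR) - pi\<^sup>2 * c / 6 * (1 / bL + 1 / bR)\<bar> \<le> K))"
proof (intro allI impI)
  fix bL bR :: real
  assume x: "bL > 0" and y: "bR > 0" and ne: "bL * bR \<noteq> 4 * pi\<^sup>2"
  show "\<exists>K::real. \<forall>(c::real) (n :: real \<times> real \<Rightarrow> nat).
       cft_spectrum c n \<and> n (0, 0) \<ge> 1 \<and>
       (\<forall>\<beta>. \<beta> > 2 * pi \<longrightarrow>
          (\<Sum>\<^sub>\<infinity>p\<in>{p. fst p + snd p \<le> c / 12 + \<epsilon>}.
              real (n p) * exp (- (fst p + snd p) * \<beta>)) \<le> A \<beta>) \<and>
       (\<forall>bL' bR'. bL' > 0 \<longrightarrow> bR' > 0 \<longrightarrow> bL' * bR' > 4 * pi\<^sup>2 \<longrightarrow>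
          (\<Sum>\<^sub>\<infinity>p\<in>{p. min (fst p) (snd p) \<le> c / 24}.
              real (n p) * exp (- fst p * bL' - snd p * bR')) \<le> B bL' bR')
       \<longrightarrow>
       (bL * bR > 4 * pi\<^sup>2 \<longrightarrow>
          \<bar>ln (cft_Z c n bL bR) - c / 24 * (bL + bR)\<bar> \<le> K) \<and>
       (bL * bR < 4 * pi\<^sup>2 \<longrightarrow>
          \<bar>ln (cft_Z c n bL bR) - pi\<^sup>2 * c / 6 * (1 / bL + 1 / bR)\<bar> \<le> K)"
  proof (cases "bL * bR > 4 * pi\<^sup>2")
    case True
    obtain K where K: "\<And>c n. cls \<epsilon> A B c n \<Longrightarrow> \<bar>ln (cft_Z c n bL bR) - c/24*(bL+bR)\<bar> \<le> K"
      using low_bound[OF assms(1,2) x y True] by blast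
    show ?thesis
      by (rule exI[of _ K]) (use K True in \<open>auto simp: cls_def\<close>)
  next
    case False
    then have lt: "bL * bR < 4 * pi\<^sup>2" using ne by simp
    define x' where "x' = 4*pi^2/bL"
    define y' where "y' = 4*pi^2/bR"
    have x': "x' > 0" and y': "y' > 0" unfolding x'_def y'_def using x y by auto
    have "x' * y' = (4*pi^2) * (4*pi^2) / (bL * bR)" unfolding x'_def y'_def by simp
    also have "\<dots> > (4*pi^2) * (4*pi^2) / (4*pi^2)"
      using lt x y by (intro divide_strict_left_mono) auto
    also have "(4*pi^2) * (4*pi^2) / (4*pi^2) = 4*pi^2" using pi_gt_zero by (simp add: field_simps power2_eq_square)
    finally have xy': "x' * y' > 4*pi^2" by simp
    obtain K where K: "\<And>c n. cls \<epsilon> A B c n \<Longrightarrow> \<bar>ln (cft_Z c n x' y') - c/24*(x'+y')\<bar> \<le> K"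
      using low_bound[OF assms(1,2) x' y' xy'] by blast
    have K2: "\<bar>ln (cft_Z c n bL bR) - pi\<^sup>2 * c / 6 * (1 / bL + 1 / bR)\<bar> \<le> K" if cl: "cls \<epsilon> A B c n" for c n
    proof -
      have sp: "cft_spectrum c n" using cl unfolding cls_def by blast
      have e1: "cft_Z c n bL bR = cft_Z c n x' y'" unfolding x'_def y'_def by (rule modular[OF sp x y])
      have e2: "c/24*(x'+y') = pi\<^sup>2 * c / 6 * (1 / bL + 1 / bR)"
        unfolding x'_def y'_def by (simp add: field_simps)
      show ?thesis using K[OF cl] unfolding e1 e2 .
    qed
    show ?thesis
      by (rule exI[of _ K]) (use K2 lt in \<open>auto simp: cls_def\<close>)
  qed
qed

end
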